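(* For $\epsilon\neq 0$, the map $$\Phi_{\epsilon}(x,y)=\left(\frac{\epsilon(\epsilon+1)x^{2}+\epsilon xy+(1-2\epsilon)x}{D(x,y)},\ \frac{\epsilon(2\epsilon-4)x^{2}-\epsilon(\epsilon+3)xy+6\epsilon x-\epsilon y^{2}+(2\epsilon+1)y}{D(x,y)}\right),$$ $D(x,y)=2\epsilon^{2}x^{2}-\epsilon(\epsilon+1)x-\epsilon y+2\epsilon+1$, admits a Lie symmetry and preserves a measure that is absolutely continuous with respect to the Lebesgue measure.
   Context: A (not identically zero) planar vector field $X$ is a Lie symmetry of a map $F$ if $X(F(\mathbf{x}))=DF(\mathbf{x})\,X(\mathbf{x})$, where $DF$ is the Jacobian matrix of $F$. The measure in question is nonzero. $\Phi_\epsilon$ is the KHK map of $\dot x=x(x+y-2)$, $\dot y=-x(2x+y-3)$. *)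

theory Defs
  imports "HOL-Analysis.Analysis"
begin

text \<open>Where the denominator vanishes the map is undefined mathematically; in HOL
  division by zero yields 0, which only affects a Lebesgue-null set.\<close>

definition khk_D :: "real \<Rightarrow> real \<times> real \<Rightarrow> real" where
  "khk_D e p = (case p of (x, y) \<Rightarrow>
     2 * e^2 * x^2 - e * (e + 1) * x - e * y + 2 * e + 1)"

definition khk_Phi :: "real \<Rightarrow> real \<times> real \<Rightarrow> real \<times> real" where
  "khk_Phi e p = (case p of (x, y) \<Rightarrow>
     ((e * (e + 1) * x^2 + e * x * y + (1 - 2 * e) * x) / khk_D e (x, y),
      (e * (2 * e - 4) * x^2 - e * (e + 3) * x * y + 6 * e * x - e * y^2
        + (2 * e + 1) * y) / khk_D e (x, y)))"

definition lie_symmetry ::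
  "(real \<times> real \<Rightarrow> real \<times> real) \<Rightarrow> (real \<times> real \<Rightarrow> real \<times> real) \<Rightarrow> bool" where
  "lie_symmetry F X \<longleftrightarrow>
     (\<exists>U. open U \<and> closure U = UNIV \<and> continuous_on U X \<and> (\<exists>p\<in>U. X p \<noteq> 0) \<and>
       (\<forall>p\<in>U. F p \<in> U \<longrightarrow>
          (\<exists>F'. (F has_derivative F') (at p) \<and> X (F p) = F' (X p))))"

definition preserves_ac_measure :: "(real \<times> real \<Rightarrow> real \<times> real) \<Rightarrow> bool" where
  "preserves_ac_measure F \<longleftrightarrow>
     (\<exists>\<mu> :: (real \<times> real) measure.
        sets \<mu> = sets lborel \<and> sigma_finite_measure \<mu> \<and>
        absolutely_continuous lborel \<mu> \<and> emeasure \<mu> UNIV \<noteq> 0 \<and>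
        F \<in> borel_measurable borel \<and>
        (\<forall>B \<in> sets borel. emeasure \<mu> (F -` B) = emeasure \<mu> B))"

end

theory Submission
  imports Defs "HOL-Computational_Algebra.Polynomial"
begin

definition T2 :: "real^2 \<Rightarrow> real \<times> real" where "T2 v = (v$1, v$2)"
definition U2 :: "real \<times> real \<Rightarrow> real^2" where "U2 p = vector [fst p, snd p]"

lemma T2U2 [simp]: "T2 (U2 p) = p" by (simp add: T2_def U2_def)
lemma U2T2 [simp]: "U2 (T2 v) = v"
  by (simp add: T2_def U2_def vec_eq_iff forall_2)

lemma linear_T2: "linear T2"
  by (rule linearI) (auto simp: T2_def)
lemma linear_U2: "linear U2"
  by (rule linearI) (auto simp: U2_def vec_eq_iff forall_2)

lemma T2_borel [measurable]: "T2 \<in> borel_measurable borel"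
  by (intro borel_measurable_continuous_onI linear_continuous_on linear_conv_bounded_linear[THEN iffD1] linear_T2)
lemma U2_borel [measurable]: "U2 \<in> borel_measurable borel"
  by (intro borel_measurable_continuous_onI linear_continuous_on linear_conv_bounded_linear[THEN iffD1] linear_U2)

lemma Basis_pair_real: "(Basis :: (real \<times> real) set) = {(1,0),(0,1)}"
  by (auto simp: Basis_prod_def)

lemma Basis_vec2: "(Basis :: (real^2) set) = {axis 1 1, axis 2 1}"
  by (auto simp: Basis_vec_def UNIV_2)

lemma distr_T2: "distr lborel borel T2 = lborel"
proof (rule lborel_eqI[symmetric])
  fix l u :: "real \<times> real"
  assume le: "\<And>b. b \<in> Basis \<Longrightarrow> l \<bullet> b \<le> u \<bullet> b"
  have le1: "fst l \<le> fst u" and le2: "snd l \<le> snd u"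
    using le[of "(1,0)"] le[of "(0,1)"] by (auto simp: Basis_pair_real inner_Pair_0)
  have pre: "T2 -` box l u = box (U2 l) (U2 u)"
    by (auto simp: mem_box_cart T2_def U2_def mem_box Basis_pair_real forall_2 inner_Pair_0)
  have ax: "axis 1 (1::real) \<noteq> (axis 2 1 :: real^2)"
    by (simp add: axis_eq_axis)
  have "emeasure (distr lborel borel T2) (box l u) = emeasure lborel (box (U2 l) (U2 u))"
    by (simp add: emeasure_distr pre)
  also have "\<dots> = ennreal ((fst u - fst l) * (snd u - snd l))"
    using le1 le2 ax by (simp add: emeasure_lborel_box_eq Basis_vec2 inner_axis U2_def)
  also have "\<dots> = ennreal (\<Prod>b\<in>Basis. (u - l) \<bullet> b)"
    by (simp add: Basis_pair_real inner_Pair_0)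
  finally show "emeasure (distr lborel borel T2) (box l u) = (\<Prod>b\<in>Basis. (u - l) \<bullet> b)" .
qed simp

lemma cov_cart:
  fixes g :: "real^2 \<Rightarrow> real^2"
  assumes S: "S \<in> sets borel" and gS: "g ` S \<in> sets borel"
    and der: "\<And>x. x \<in> S \<Longrightarrow> (g has_derivative g' x) (at x)"
    and inj: "inj_on g S"
    and Jm: "Jd \<in> borel_measurable borel"
    and J: "\<And>x. x \<in> S \<Longrightarrow> Jd x = \<bar>det (matrix (g' x))\<bar>"
  shows "emeasure lborel (g ` S) = (\<integral>\<^sup>+ x. ennreal (Jd x) * indicator S x \<partial>lborel)"
proof -
  have SL: "S \<in> sets lebesgue" using S by (simp add: sets_completionI_sets)
  have gSL: "g ` S \<in> sets lebesgue" using gS by (simp add: sets_completionI_sets)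
  have der': "\<And>x. x \<in> S \<Longrightarrow> (g has_derivative g' x) (at x within S)"
    using der has_derivative_at_withinI by blast
  have eqi: "(\<integral>\<^sup>+ x. ennreal (Jd x) * indicator S x \<partial>lborel)
      = (\<integral>\<^sup>+ x. ennreal \<bar>det (matrix (g' x))\<bar> * indicator S x \<partial>lborel)"
    by (intro nn_integral_cong) (auto simp: J indicator_def)
  have em: "emeasure lborel (g ` S) = emeasure lebesgue (g ` S)"
    using gS by (simp add: emeasure_completion)
  show ?thesis
  proof (cases "(\<lambda>x. \<bar>det (matrix (g' x))\<bar>) integrable_on S")
    case True
    then have hi: "((\<lambda>x. \<bar>det (matrix (g' x))\<bar>) has_integral integral S (\<lambda>x. \<bar>det (matrix (g' x))\<bar>)) S"
      by (simp add: integrable_integral)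
    then have m: "g ` S \<in> lmeasurable" "measure lebesgue (g ` S) = integral S (\<lambda>x. \<bar>det (matrix (g' x))\<bar>)"
      using has_measure_differentiable_image[OF SL der' inj] by blast+
    have "emeasure lebesgue (g ` S) = ennreal (measure lebesgue (g ` S))"
      using m(1) by (simp add: emeasure_eq_measure2)
    moreover have "(\<integral>\<^sup>+ x. ennreal \<bar>det (matrix (g' x))\<bar> * indicator S x \<partial>lborel)
        = ennreal (integral S (\<lambda>x. \<bar>det (matrix (g' x))\<bar>))"
      by (rule nn_integral_has_integral_lebesgue'[OF _ hi]) simp
    ultimately show ?thesis using em eqi m(2) by simp
  next
    case False
    then have "g ` S \<notin> lmeasurable"
      using measurable_differentiable_image_eq[OF SL der' inj] by blast
    then have inf: "emeasure lebesgue (g ` S) = \<infinity>"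
    proof (rule contrapos_np)
      assume "emeasure lebesgue (g ` S) \<noteq> \<infinity>"
      then show "g ` S \<in> lmeasurable" using gSL by (intro fmeasurableI) (simp_all add: less_top)
    qed
    have "(\<integral>\<^sup>+ x. ennreal (Jd x) * indicator S x \<partial>lborel) = \<infinity>"
    proof (rule ccontr)
      assume "(\<integral>\<^sup>+ x. ennreal (Jd x) * indicator S x \<partial>lborel) \<noteq> \<infinity>"
      then obtain r where r: "(\<integral>\<^sup>+ x. ennreal (Jd x) * indicator S x \<partial>lborel) = ennreal r" "0 \<le> r"
        using ennreal_cases[of "(\<integral>\<^sup>+ x. ennreal (Jd x) * indicator S x \<partial>lborel)"] by auto
      have "((\<lambda>x. indicator S x * \<bar>Jd x\<bar>) has_integral r) UNIV"
      proof (rule nn_integral_has_integral)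
        show "(\<lambda>x. indicator S x * \<bar>Jd x\<bar>) \<in> borel_measurable borel" using S Jm by measurable
        show "(\<integral>\<^sup>+ x. ennreal (indicator S x * \<bar>Jd x\<bar>) \<partial>lborel) = ennreal r"
          using r(1) by (subst (asm) nn_integral_cong[where v="\<lambda>x. ennreal (indicator S x * \<bar>Jd x\<bar>)"])
             (auto simp: indicator_def J)
      qed (use r in auto)
      then have "((\<lambda>x. if x \<in> S then \<bar>Jd x\<bar> else 0) has_integral r) UNIV"
        by (rule has_integral_eq[rotated]) (simp add: indicator_def)
      then have "((\<lambda>x. \<bar>Jd x\<bar>) has_integral r) S"
        by (simp only: has_integral_restrict_UNIV)
      then have "((\<lambda>x. \<bar>det (matrix (g' x))\<bar>) has_integral r) S"
        by (rule has_integral_eq[rotated]) (simp add: J)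
      then have "(\<lambda>x. \<bar>det (matrix (g' x))\<bar>) integrable_on S"
        by (rule has_integral_integrable)
      with False show False by simp
    qed
    then show ?thesis using inf em by simp
  qed
qed


definition jac :: "(real \<times> real \<Rightarrow> real \<times> real) \<Rightarrow> real" where
  "jac L = fst (L (1,0)) * snd (L (0,1)) - fst (L (0,1)) * snd (L (1,0))"

lemma cov_pair:
  fixes g :: "real \<times> real \<Rightarrow> real \<times> real"
  assumes S: "S \<in> sets borel" and gS: "g ` S \<in> sets borel"
    and der: "\<And>x. x \<in> S \<Longrightarrow> (g has_derivative g' x) (at x)"
    and inj: "inj_on g S"
    and Jm: "Jf \<in> borel_measurable borel"
    and J: "\<And>x. x \<in> S \<Longrightarrow> Jf x = \<bar>jac (g' x)\<bar>"
  shows "emeasure lborel (g ` S) = (\<integral>\<^sup>+ x. ennreal (Jf x) * indicator S x \<partial>lborel)"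
proof -
  define h where "h = (\<lambda>v. U2 (g (T2 v)))"
  define h' where "h' = (\<lambda>v w. U2 (g' (T2 v) (T2 w)))"
  define S2 where "S2 = T2 -` S"
  have S2: "S2 \<in> sets borel" unfolding S2_def using measurable_sets[OF T2_borel S] by simp
  have hS2: "h ` S2 = T2 -` (g ` S)"
  proof
    show "h ` S2 \<subseteq> T2 -` g ` S" by (auto simp: h_def S2_def)
    show "T2 -` g ` S \<subseteq> h ` S2"
    proof
      fix v assume "v \<in> T2 -` g ` S"
      then obtain p where p: "p \<in> S" "T2 v = g p" by auto
      then have "v = h (U2 p)" by (auto simp: h_def) (metis U2T2)
      moreover have "U2 p \<in> S2" using p by (simp add: S2_def)
      ultimately show "v \<in> h ` S2" by blast
    qed
  qed
  have hS2b: "h ` S2 \<in> sets borel" unfolding hS2 using measurable_sets[OF T2_borel gS] by simp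
  have blT2: "bounded_linear T2" by (rule linear_conv_bounded_linear[THEN iffD1, OF linear_T2])
  have blU2: "bounded_linear U2" by (rule linear_conv_bounded_linear[THEN iffD1, OF linear_U2])
  have dh: "(h has_derivative h' v) (at v)" if "v \<in> S2" for v
  proof -
    have "((\<lambda>v. g (T2 v)) has_derivative (\<lambda>w. g' (T2 v) (T2 w))) (at v)"
      using has_derivative_compose[OF bounded_linear_imp_has_derivative[OF blT2] der[of "T2 v"]] that
      by (simp add: S2_def)
    from has_derivative_compose[OF this bounded_linear_imp_has_derivative[OF blU2]]
    show ?thesis by (simp add: h_def h'_def)
  qed
  have injh: "inj_on h S2"
  proof (rule inj_onI)
    fix a b assume "a \<in> S2" "b \<in> S2" "h a = h b"
    then have "g (T2 a) = g (T2 b)" by (simp add: h_def) (metis T2U2)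
    then have "T2 a = T2 b" using inj \<open>a \<in> S2\<close> \<open>b \<in> S2\<close> by (auto simp: S2_def inj_on_def)
    then show "a = b" by (metis U2T2)
  qed
  have Jm2: "(\<lambda>v. Jf (T2 v)) \<in> borel_measurable borel" using Jm by measurable
  have J2: "Jf (T2 v) = \<bar>det (matrix (h' v))\<bar>" if "v \<in> S2" for v
  proof -
    have a1: "T2 (axis 1 1) = (1,0)" and a2: "T2 (axis 2 1) = (0,1)"
      by (simp_all add: T2_def axis_def)
    have "det (matrix (h' v)) = jac (g' (T2 v))"
      by (simp add: det_2 matrix_def h'_def a1 a2 jac_def U2_def)
    then show ?thesis using J[of "T2 v"] that by (simp add: S2_def)
  qed
  have "emeasure lborel (g ` S) = emeasure (distr lborel borel T2) (g ` S)"
    by (simp add: distr_T2)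
  also have "\<dots> = emeasure lborel (T2 -` (g ` S))"
    using gS by (simp add: emeasure_distr)
  also have "\<dots> = emeasure lborel (h ` S2)" by (simp add: hS2)
  also have "\<dots> = (\<integral>\<^sup>+ v. ennreal (Jf (T2 v)) * indicator S2 v \<partial>lborel)"
    by (rule cov_cart[OF S2 hS2b dh injh Jm2 J2])
  also have "\<dots> = (\<integral>\<^sup>+ v. ennreal (Jf (T2 v)) * indicator S (T2 v) \<partial>lborel)"
    by (simp add: S2_def indicator_def)
  also have "\<dots> = (\<integral>\<^sup>+ x. ennreal (Jf x) * indicator S x \<partial>(distr lborel borel T2))"
    using S Jm by (subst nn_integral_distr) auto
  also have "\<dots> = (\<integral>\<^sup>+ x. ennreal (Jf x) * indicator S x \<partial>lborel)"
    by (simp add: distr_T2)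
  finally show ?thesis .
qed


lemma cov_w:
  fixes g :: "real \<times> real \<Rightarrow> real \<times> real" and f :: "real \<times> real \<Rightarrow> ennreal"
  assumes S: "S \<in> sets borel" and gS: "g ` S \<in> sets borel"
    and der: "\<And>x. x \<in> S \<Longrightarrow> (g has_derivative g' x) (at x)"
    and inj: "inj_on g S"
    and Jm: "Jf \<in> borel_measurable borel"
    and J: "\<And>x. x \<in> S \<Longrightarrow> Jf x = \<bar>jac (g' x)\<bar>"
    and gm: "g \<in> borel_measurable borel"
    and fm: "f \<in> borel_measurable borel"
  shows "(\<integral>\<^sup>+ q. f q * indicator (g ` S) q \<partial>lborel)
       = (\<integral>\<^sup>+ p. f (g p) * (ennreal (Jf p) * indicator S p) \<partial>lborel)"
proof -
  define \<nu> where "\<nu> = density lborel (\<lambda>p. ennreal (Jf p) * indicator S p)"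
  have dm: "(\<lambda>p. ennreal (Jf p) * indicator S p) \<in> borel_measurable borel"
    using Jm S by measurable
  have sn: "sets \<nu> = sets borel" by (simp add: \<nu>_def)
  have gmn: "g \<in> measurable \<nu> lborel"
    using gm unfolding measurable_cong_sets[OF sn refl] by simp
  have deq: "distr \<nu> lborel g = density lborel (indicator (g ` S))"
  proof (rule measure_eqI)
    show "sets (distr \<nu> lborel g) = sets (density lborel (indicator (g ` S)))" by simp
    fix A assume "A \<in> sets (distr \<nu> lborel g)"
    then have A: "A \<in> sets borel" by simp
    have SA: "g -` A \<inter> S \<in> sets borel"
      using measurable_sets[OF gm A] S by auto
    have gSA: "g ` (g -` A \<inter> S) = A \<inter> g ` S" by auto
    have gSAb: "g ` (g -` A \<inter> S) \<in> sets borel" unfolding gSA using A gS by auto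
    have "emeasure (distr \<nu> lborel g) A = emeasure \<nu> (g -` A)"
      using A gmn by (simp add: emeasure_distr \<nu>_def)
    also have "\<dots> = (\<integral>\<^sup>+ p. ennreal (Jf p) * indicator S p * indicator (g -` A) p \<partial>lborel)"
      unfolding \<nu>_def using measurable_sets[OF gm A] dm
      by (subst emeasure_density) (auto simp: nn_integral_set_ennreal)
    also have "\<dots> = (\<integral>\<^sup>+ p. ennreal (Jf p) * indicator (g -` A \<inter> S) p \<partial>lborel)"
      by (intro nn_integral_cong) (auto simp: indicator_def)
    also have "\<dots> = emeasure lborel (g ` (g -` A \<inter> S))"
      by (rule cov_pair[symmetric, OF SA gSAb der inj_on_subset[OF inj] Jm J]) auto
    also have "\<dots> = emeasure lborel (A \<inter> g ` S)" by (simp add: gSA)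
    also have "\<dots> = emeasure (density lborel (indicator (g ` S))) A"
    proof -
      have "emeasure (density lborel (indicator (g ` S))) A = (\<integral>\<^sup>+ x. indicator (g ` S) x * indicator A x \<partial>lborel)"
        using A gS by (intro emeasure_density) auto
      also have "\<dots> = (\<integral>\<^sup>+ x. indicator (A \<inter> g ` S) x \<partial>lborel)"
        by (intro nn_integral_cong) (auto simp: indicator_def)
      also have "\<dots> = emeasure lborel (A \<inter> g ` S)"
        using A gS by (intro nn_integral_indicator) auto
      finally show ?thesis by simp
    qed
    finally show "emeasure (distr \<nu> lborel g) A = emeasure (density lborel (indicator (g ` S))) A" .
  qed
  have "(\<integral>\<^sup>+ q. f q * indicator (g ` S) q \<partial>lborel) = (\<integral>\<^sup>+ q. f q \<partial>density lborel (indicator (g ` S)))"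
    using gS fm by (subst nn_integral_density) (auto simp: mult.commute)
  also have "\<dots> = (\<integral>\<^sup>+ q. f q \<partial>distr \<nu> lborel g)" by (simp add: deq)
  also have "\<dots> = (\<integral>\<^sup>+ p. f (g p) \<partial>\<nu>)"
    using gmn fm by (subst nn_integral_distr) auto
  also have "\<dots> = (\<integral>\<^sup>+ p. f (g p) * (ennreal (Jf p) * indicator S p) \<partial>lborel)"
    unfolding \<nu>_def using dm fm gm by (subst nn_integral_density) (auto simp: mult.commute)
  finally show ?thesis .
qed

definition dd :: "real \<Rightarrow> real \<Rightarrow> real \<Rightarrow> real" where
  "dd e x y = 2 * e^2 * x^2 - e * (e + 1) * x - e * y + 2 * e + 1"
definition n1 :: "real \<Rightarrow> real \<Rightarrow> real \<Rightarrow> real" where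
  "n1 e x y = e * (e + 1) * x^2 + e * x * y + (1 - 2 * e) * x"
definition n2 :: "real \<Rightarrow> real \<Rightarrow> real \<Rightarrow> real" where
  "n2 e x y = e * (2 * e - 4) * x^2 - e * (e + 3) * x * y + 6 * e * x - e * y^2 + (2 * e + 1) * y"
definition kk :: "real \<Rightarrow> real \<Rightarrow> real \<Rightarrow> real" where
  "kk e x y = 2*e^2*(n1 e x y)^2 + e*(1-e)*n1 e x y * dd e x y + e * n2 e x y * dd e x y + (1 - 2*e) * (dd e x y)^2"
definition nn :: "real \<Rightarrow> real \<Rightarrow> real" where "nn x y = x^2 + x*y + y^2/2 - 3*x - 2*y + 5/2"
definition qq :: "real \<Rightarrow> real \<Rightarrow> real" where "qq e x = 1 + e^2 * x^2"
definition X1 :: "real \<Rightarrow> real \<Rightarrow> real" where "X1 x y = - x * (x + y - 2)"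
definition R2 :: "real \<Rightarrow> real \<Rightarrow> real \<Rightarrow> real" where "R2 e x y = x * ((2*x + y - 3) * qq e x - 2 * e^2 * x * nn x y)"
definition n1x :: "real \<Rightarrow> real \<Rightarrow> real \<Rightarrow> real" where "n1x e x y = 2*e*(e+1)*x + e*y + (1 - 2*e)"
definition n1y :: "real \<Rightarrow> real \<Rightarrow> real \<Rightarrow> real" where "n1y e x y = e * x"
definition n2x :: "real \<Rightarrow> real \<Rightarrow> real \<Rightarrow> real" where "n2x e x y = 2*e*(2*e-4)*x - e*(e+3)*y + 6*e"
definition n2y :: "real \<Rightarrow> real \<Rightarrow> real \<Rightarrow> real" where "n2y e x y = - e*(e+3)*x - 2*e*y + (2*e+1)"
definition ddx :: "real \<Rightarrow> real \<Rightarrow> real \<Rightarrow> real" where "ddx e x y = 4*e^2*x - e*(e+1)"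
definition ddy :: "real \<Rightarrow> real \<Rightarrow> real \<Rightarrow> real" where "ddy e x y = - e"

definition Xf :: "real \<Rightarrow> real \<times> real \<Rightarrow> real \<times> real" where
  "Xf e p = (X1 (fst p) (snd p), R2 e (fst p) (snd p) / qq e (fst p))"

definition a11 where "a11 e x y = (n1x e x y * dd e x y - n1 e x y * ddx e x y) / (dd e x y)^2"
definition a12 where "a12 e x y = (n1y e x y * dd e x y - n1 e x y * ddy e x y) / (dd e x y)^2"
definition a21 where "a21 e x y = (n2x e x y * dd e x y - n2 e x y * ddx e x y) / (dd e x y)^2"
definition a22 where "a22 e x y = (n2y e x y * dd e x y - n2 e x y * ddy e x y) / (dd e x y)^2"

definition Fd :: "real \<Rightarrow> real \<Rightarrow> real \<Rightarrow> real \<times> real \<Rightarrow> real \<times> real" where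
  "Fd e x y h = (a11 e x y * fst h + a12 e x y * snd h, a21 e x y * fst h + a22 e x y * snd h)"

lemma qq_pos: "qq e x > 0"
  unfolding qq_def by (simp add: add_pos_nonneg)

lemma Phi_eq: "khk_Phi e p = (n1 e (fst p) (snd p) / dd e (fst p) (snd p), n2 e (fst p) (snd p) / dd e (fst p) (snd p))"
  by (cases p) (simp add: khk_Phi_def khk_D_def n1_def n2_def dd_def)

lemma D_eq: "khk_D e p = dd e (fst p) (snd p)"
  by (cases p) (simp add: khk_D_def dd_def)

lemma der_quot:
  fixes a b :: "real \<times> real \<Rightarrow> real"
  assumes da: "(a has_derivative (\<lambda>h. ax * fst h + ay * snd h)) (at p)"
    and db: "(b has_derivative (\<lambda>h. bx * fst h + by * snd h)) (at p)"
    and nz: "b p \<noteq> 0"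
  shows "((\<lambda>q. a q / b q) has_derivative
     (\<lambda>h. (ax * b p - a p * bx) / (b p)^2 * fst h + (ay * b p - a p * by) / (b p)^2 * snd h)) (at p)"
  apply (rule has_derivative_eq_rhs[OF has_derivative_divide[OF da db nz]])
  using nz by (auto simp: fun_eq_iff field_simps power2_eq_square)

lemma der_n1: "((\<lambda>p. n1 e (fst p) (snd p)) has_derivative (\<lambda>h. n1x e x y * fst h + n1y e x y * snd h)) (at (x,y))"
  unfolding n1_def n1x_def n1y_def
  by (rule derivative_eq_intros refl | simp)+ (auto simp: fun_eq_iff algebra_simps power2_eq_square)


lemma der_n2: "((\<lambda>p. n2 e (fst p) (snd p)) has_derivative (\<lambda>h. n2x e x y * fst h + n2y e x y * snd h)) (at (x,y))"
  unfolding n2_def n2x_def n2y_def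
  by (rule derivative_eq_intros refl | simp)+ (auto simp: fun_eq_iff algebra_simps power2_eq_square)

lemma der_dd: "((\<lambda>p. dd e (fst p) (snd p)) has_derivative (\<lambda>h. ddx e x y * fst h + ddy e x y * snd h)) (at (x,y))"
  unfolding dd_def ddx_def ddy_def
  by (rule derivative_eq_intros refl | simp)+ (auto simp: fun_eq_iff algebra_simps power2_eq_square)

lemma Phi_fun: "khk_Phi e = (\<lambda>p. (n1 e (fst p) (snd p) / dd e (fst p) (snd p), n2 e (fst p) (snd p) / dd e (fst p) (snd p)))"
  by (rule ext) (rule Phi_eq)

lemma der_Phi:
  assumes "dd e x y \<noteq> 0"
  shows "(khk_Phi e has_derivative Fd e x y) (at (x,y))"
proof -
  have d1: "((\<lambda>p. n1 e (fst p) (snd p) / dd e (fst p) (snd p)) has_derivative (\<lambda>h. a11 e x y * fst h + a12 e x y * snd h)) (at (x,y))"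
    using der_quot[OF der_n1 der_dd, of e x y] assms by (simp add: a11_def a12_def)
  have d2: "((\<lambda>p. n2 e (fst p) (snd p) / dd e (fst p) (snd p)) has_derivative (\<lambda>h. a21 e x y * fst h + a22 e x y * snd h)) (at (x,y))"
    using der_quot[OF der_n2 der_dd, of e x y] assms by (simp add: a21_def a22_def)
  show ?thesis
    unfolding Phi_fun Fd_def[abs_def] by (rule has_derivative_Pair[OF d1 d2])
qed

lemma L1: "- n1 e x y * (n1 e x y + n2 e x y - 2 * dd e x y) * qq e x =
   (n1x e x y * dd e x y - n1 e x y * ddx e x y) * X1 x y * qq e x + (n1y e x y * dd e x y - n1 e x y * ddy e x y) * R2 e x y"
  unfolding n1_def n2_def dd_def qq_def X1_def R2_def n1x_def n1y_def ddx_def ddy_def nn_def by algebra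

lemma L2: "n1 e x y * ((2 * n1 e x y + n2 e x y - 3 * dd e x y) * ((dd e x y)^2 + e^2 * (n1 e x y)^2)
      - 2 * e^2 * n1 e x y * ((n1 e x y)^2 + n1 e x y * n2 e x y + (n2 e x y)^2/2 - 3 * n1 e x y * dd e x y - 2 * n2 e x y * dd e x y + 5/2 * (dd e x y)^2)) * qq e x
   = ((n2x e x y * dd e x y - n2 e x y * ddx e x y) * X1 x y * qq e x + (n2y e x y * dd e x y - n2 e x y * ddy e x y) * R2 e x y) * ((dd e x y)^2 + e^2 * (n1 e x y)^2)"
  unfolding n1_def n2_def dd_def qq_def X1_def R2_def n2x_def n2y_def ddx_def ddy_def nn_def by algebra

lemma comp1_abs:
  fixes N1 N2 D q X R A B :: real
  assumes D: "D \<noteq> 0" and q: "q \<noteq> 0" and h: "- N1 * (N1 + N2 - 2 * D) * q = A * X * q + B * R"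
  shows "- (N1 / D) * (N1 / D + N2 / D - 2) = A / D^2 * X + B / D^2 * (R / q)"
proof -
  define P where "P = - N1 * (N1 + N2 - 2 * D)"
  define Q where "Q = A * X * q + B * R"
  have hh: "P * q = Q" using h by (simp add: P_def Q_def)
  have "A / D^2 * X + B / D^2 * (R / q) = Q / (D^2 * q)"
    using D q unfolding Q_def by (simp add: field_simps power2_eq_square)
  also have "\<dots> = P / D^2" using q by (simp add: hh[symmetric])
  also have "\<dots> = - (N1 / D) * (N1 / D + N2 / D - 2)"
    using D unfolding P_def by (simp add: field_simps power2_eq_square)
  finally show ?thesis by simp
qed

lemma comp2_abs:
  fixes N1 N2 D q X R A B e :: real
  assumes D: "D \<noteq> 0" and q: "q \<noteq> 0"
    and h: "N1 * ((2 * N1 + N2 - 3 * D) * (D^2 + e^2 * N1^2)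
      - 2 * e^2 * N1 * (N1^2 + N1 * N2 + N2^2/2 - 3 * N1 * D - 2 * N2 * D + 5/2 * D^2)) * q
      = (A * X * q + B * R) * (D^2 + e^2 * N1^2)"
  shows "R2 e (N1 / D) (N2 / D) / qq e (N1 / D) = A / D^2 * X + B / D^2 * (R / q)"
proof -
  define E where "E = D^2 + e^2 * N1^2"
  define P where "P = N1 * ((2 * N1 + N2 - 3 * D) * (D^2 + e^2 * N1^2)
      - 2 * e^2 * N1 * (N1^2 + N1 * N2 + N2^2/2 - 3 * N1 * D - 2 * N2 * D + 5/2 * D^2))"
  define Q where "Q = A * X * q + B * R"
  have hh: "P * q = Q * E" using h by (simp add: P_def Q_def E_def)
  have E0: "E \<noteq> 0"
    using D unfolding E_def by (metis add_nonneg_eq_0_iff power_not_zero zero_le_power2 mult_nonneg_nonneg)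
  have qF: "qq e (N1 / D) = E / D^2"
    using D unfolding E_def by (simp add: qq_def field_simps power2_eq_square)
  have RF: "R2 e (N1 / D) (N2 / D) = P / D^4"
    using D unfolding R2_def qq_def nn_def P_def by (simp add: field_simps power2_eq_square) algebra
  have "R2 e (N1 / D) (N2 / D) / qq e (N1 / D) = P / (D^2 * E)"
    unfolding RF qF using D E0 by (simp add: field_simps power2_eq_square power4_eq_xxxx)
  also have "\<dots> = (P * q) / (D^2 * E * q)" using q by simp
  also have "\<dots> = Q / (D^2 * q)" unfolding hh using E0 by simp
  also have "\<dots> = A / D^2 * X + B / D^2 * (R / q)"
    using D q unfolding Q_def by (simp add: field_simps power2_eq_square)
  finally show ?thesis .
qed

lemma lie_id:
  assumes D: "dd e x y \<noteq> 0"
  shows "Xf e (khk_Phi e (x,y)) = Fd e x y (Xf e (x,y))"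
proof -
  have q0: "qq e x \<noteq> 0" using qq_pos[of e x] by simp
  have c1: "X1 (n1 e x y / dd e x y) (n2 e x y / dd e x y) = a11 e x y * X1 x y + a12 e x y * (R2 e x y / qq e x)"
    using comp1_abs[OF D q0 L1[of e x y]] unfolding a11_def a12_def X1_def by (simp only:)
  have c2: "R2 e (n1 e x y / dd e x y) (n2 e x y / dd e x y) / qq e (n1 e x y / dd e x y) = a21 e x y * X1 x y + a22 e x y * (R2 e x y / qq e x)"
    using comp2_abs[OF D q0 L2[of e x y]] unfolding a21_def a22_def by (simp only:)
  show ?thesis using c1 c2 by (simp add: Phi_eq Xf_def Fd_def)
qed

lemma qq_ne: "1 + e^2 * t^2 \<noteq> (0::real)"
  using qq_pos[of e t] by (simp add: qq_def)

lemma lie: "e \<noteq> 0 \<Longrightarrow> lie_symmetry (khk_Phi e) (Xf e)"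
  unfolding lie_symmetry_def
proof (intro exI[of _ "{p. khk_D e p \<noteq> 0}"] conjI)
  assume e: "e \<noteq> 0"
  have Dfun: "khk_D e = (\<lambda>p. dd e (fst p) (snd p))" by (rule ext) (rule D_eq)
  have cD: "continuous_on UNIV (khk_D e)"
    unfolding Dfun dd_def by (intro continuous_intros)
  show "open {p. khk_D e p \<noteq> 0}"
    by (rule open_Collect_neq[OF cD continuous_on_const])
  show "closure {p. khk_D e p \<noteq> 0} = UNIV"
  proof -
    have "z \<in> closure {p. khk_D e p \<noteq> 0}" for z :: "real \<times> real"
      unfolding closure_approachable
    proof (intro allI impI)
      fix \<epsilon> :: real assume \<epsilon>: "\<epsilon> > 0"
      obtain a b where z: "z = (a, b)" by (cases z)
      show "\<exists>w\<in>{p. khk_D e p \<noteq> 0}. dist w z < \<epsilon>"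
      proof (cases "khk_D e z = 0")
        case False then show ?thesis using \<epsilon> by (intro bexI[of _ z]) auto
      next
        case True
        have "khk_D e (a, b + \<epsilon>/2) = khk_D e z - e * (\<epsilon>/2)"
          by (simp add: z khk_D_def algebra_simps)
        then have "khk_D e (a, b + \<epsilon>/2) \<noteq> 0" using True e \<epsilon> by simp
        moreover have "dist (a, b + \<epsilon>/2) z < \<epsilon>"
          using \<epsilon> by (simp add: z dist_Pair_Pair dist_real_def)
        ultimately show ?thesis by blast
      qed
    qed
    then show ?thesis by auto
  qed
  show "continuous_on {p. khk_D e p \<noteq> 0} (Xf e)"
  proof -
    have c1: "continuous_on UNIV (\<lambda>p::real\<times>real. X1 (fst p) (snd p))"
      unfolding X1_def by (intro continuous_intros)
    have c2: "continuous_on UNIV (\<lambda>p::real\<times>real. R2 e (fst p) (snd p))"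
      unfolding R2_def qq_def nn_def by (intro continuous_intros) auto
    have c3: "continuous_on UNIV (\<lambda>p::real\<times>real. qq e (fst p))"
      unfolding qq_def by (intro continuous_intros)
    have c4: "continuous_on UNIV (\<lambda>p::real\<times>real. R2 e (fst p) (snd p) / qq e (fst p))"
      by (rule continuous_on_divide[OF c2 c3]) (simp add: qq_pos[THEN less_imp_neq, symmetric])
    have "continuous_on UNIV (Xf e)"
      unfolding Xf_def[abs_def] by (rule continuous_on_Pair[OF c1 c4])
    then show ?thesis by (rule continuous_on_subset) simp
  qed
  show "\<exists>p\<in>{p. khk_D e p \<noteq> 0}. Xf e p \<noteq> 0"
  proof (intro bexI[of _ "(1,0)"])
    have "khk_D e (1,0) = e^2 + e + 1" by (simp add: khk_D_def power2_eq_square algebra_simps)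
    also have "\<dots> = (e + 1/2)^2 + 3/4" by (simp add: power2_eq_square algebra_simps)
    also have "\<dots> > 0" by (simp add: add_nonneg_pos)
    finally show "(1::real, 0::real) \<in> {p. khk_D e p \<noteq> 0}" by simp
    show "Xf e (1,0) \<noteq> 0" by (simp add: Xf_def X1_def zero_prod_def)
  qed
  show "\<forall>p\<in>{p. khk_D e p \<noteq> 0}. khk_Phi e p \<in> {p. khk_D e p \<noteq> 0} \<longrightarrow>
          (\<exists>F'. (khk_Phi e has_derivative F') (at p) \<and> Xf e (khk_Phi e p) = F' (Xf e p))"
  proof (intro ballI impI)
    fix p :: "real \<times> real" assume "p \<in> {p. khk_D e p \<noteq> 0}"
    then obtain x y where p: "p = (x,y)" and D: "dd e x y \<noteq> 0" by (cases p) (auto simp: D_eq)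
    show "\<exists>F'. (khk_Phi e has_derivative F') (at p) \<and> Xf e (khk_Phi e p) = F' (Xf e p)"
      using der_Phi[OF D] lie_id[OF D] p by blast
  qed
qed

lemma dd_neg_abs: "D \<noteq> 0 \<Longrightarrow> dd (-e) (N1/D) (N2/D) = (2*e^2*N1^2 + e*(1-e)*N1*D + e*N2*D + (1-2*e)*D^2)/D^2"
  by (simp add: dd_def field_simps power2_eq_square)

lemma n1_neg_abs: "D \<noteq> 0 \<Longrightarrow> n1 (-e) (N1/D) (N2/D) = ((-e)*(-e+1)*N1^2 + (-e)*N1*N2 + (1+2*e)*N1*D)/D^2"
  by (simp add: n1_def field_simps power2_eq_square)

lemma n2_neg_abs: "D \<noteq> 0 \<Longrightarrow> n2 (-e) (N1/D) (N2/D) = ((-e)*(-2*e-4)*N1^2 + e*(-e+3)*N1*N2 - 6*e*N1*D + e*N2^2 + (1-2*e)*N2*D)/D^2"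
  by (simp add: n2_def field_simps power2_eq_square)

lemma P1: "(-e) * (-e + 1) * (n1 e x y)^2 + (-e) * n1 e x y * n2 e x y + (1 + 2 * e) * n1 e x y * dd e x y = x * kk e x y"
  unfolding kk_def n1_def n2_def dd_def by algebra

lemma P2: "(-e) * (-2 * e - 4) * (n1 e x y)^2 + e * (-e + 3) * n1 e x y * n2 e x y - 6 * e * n1 e x y * dd e x y + e * (n2 e x y)^2 + (1 - 2 * e) * n2 e x y * dd e x y = y * kk e x y"
  unfolding kk_def n1_def n2_def dd_def by algebra

lemma I1: "dd e x y \<noteq> 0 \<Longrightarrow> dd (-e) (n1 e x y / dd e x y) (n2 e x y / dd e x y) = kk e x y / (dd e x y)^2"
  unfolding kk_def by (rule dd_neg_abs)

lemma inv_Phi: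
  assumes D: "dd e x y \<noteq> 0" and K: "kk e x y \<noteq> 0"
  shows "khk_Phi (-e) (khk_Phi e (x,y)) = (x,y)"
proof -
  have D2: "(dd e x y)^2 \<noteq> 0" using D by simp
  have a: "n1 (-e) (n1 e x y / dd e x y) (n2 e x y / dd e x y) = x * kk e x y / (dd e x y)^2"
    by (simp only: n1_neg_abs[OF D] P1)
  have b: "n2 (-e) (n1 e x y / dd e x y) (n2 e x y / dd e x y) = y * kk e x y / (dd e x y)^2"
    by (simp only: n2_neg_abs[OF D] P2)
  show ?thesis using D2 K by (simp add: Phi_eq a b I1[OF D])
qed

definition Om :: "real \<Rightarrow> (real \<times> real) set" where
  "Om e = {p. dd e (fst p) (snd p) \<noteq> 0 \<and> kk e (fst p) (snd p) \<noteq> 0}"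

lemma Phi_Om_sub:
  assumes "p \<in> Om e"
  shows "khk_Phi e p \<in> Om (-e)" "khk_Phi (-e) (khk_Phi e p) = p"
proof -
  obtain x y where p: "p = (x,y)" by (cases p)
  have D: "dd e x y \<noteq> 0" and K: "kk e x y \<noteq> 0" using assms by (auto simp: Om_def p)
  have inv: "khk_Phi (-e) (khk_Phi e (x,y)) = (x,y)" by (rule inv_Phi[OF D K])
  then show "khk_Phi (-e) (khk_Phi e p) = p" by (simp add: p)
  define a where "a = n1 e x y / dd e x y"
  define b where "b = n2 e x y / dd e x y"
  have Fp: "khk_Phi e p = (a, b)" by (simp add: p Phi_eq a_def b_def)
  have Dq: "dd (-e) a b = kk e x y / (dd e x y)^2" unfolding a_def b_def by (rule I1[OF D])
  then have Dq0: "dd (-e) a b \<noteq> 0" using D K by simp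
  have "dd (- (-e)) (n1 (-e) a b / dd (-e) a b) (n2 (-e) a b / dd (-e) a b) = kk (-e) a b / (dd (-e) a b)^2"
    by (rule I1[OF Dq0])
  moreover have "(n1 (-e) a b / dd (-e) a b, n2 (-e) a b / dd (-e) a b) = (x, y)"
  proof -
    have "khk_Phi (-e) (a,b) = (x,y)" using inv Fp p by simp
    then show ?thesis unfolding Phi_eq fst_conv snd_conv .
  qed
  ultimately have "dd e x y = kk (-e) a b / (dd (-e) a b)^2" by simp
  then have "kk (-e) a b \<noteq> 0" using D by auto
  then show "khk_Phi e p \<in> Om (-e)" using Dq0 by (simp add: Fp Om_def)
qed

lemma Phi_image: "khk_Phi e ` Om e = Om (-e)"
proof
  show "khk_Phi e ` Om e \<subseteq> Om (-e)" using Phi_Om_sub(1) by blast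
  show "Om (-e) \<subseteq> khk_Phi e ` Om e"
  proof
    fix q assume q: "q \<in> Om (-e)"
    have "khk_Phi (-e) q \<in> Om e" using Phi_Om_sub(1)[OF q] by simp
    moreover have "khk_Phi e (khk_Phi (-e) q) = q" using Phi_Om_sub(2)[OF q] by simp
    ultimately show "q \<in> khk_Phi e ` Om e" by (metis image_eqI)
  qed
qed

lemma Phi_inj: "inj_on (khk_Phi e) (Om e)"
  by (rule inj_on_inverseI[where g="khk_Phi (-e)"]) (rule Phi_Om_sub(2))

lemma cont_dd: "continuous_on UNIV (\<lambda>p::real\<times>real. dd e (fst p) (snd p))"
  unfolding dd_def by (intro continuous_intros)
lemma cont_kk: "continuous_on UNIV (\<lambda>p::real\<times>real. kk e (fst p) (snd p))"
  unfolding kk_def n1_def n2_def dd_def by (intro continuous_intros)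

lemma open_Om: "open (Om e)"
proof -
  have "Om e = {p. dd e (fst p) (snd p) \<noteq> 0} \<inter> {p. kk e (fst p) (snd p) \<noteq> 0}"
    by (auto simp: Om_def)
  then show ?thesis
    using open_Collect_neq[OF cont_dd continuous_on_const] open_Collect_neq[OF cont_kk continuous_on_const]
    by auto
qed

lemma Om_borel: "Om e \<in> sets borel"
  using open_Om by (rule borel_open)

lemma null_fiber:
  fixes P :: "real \<times> real \<Rightarrow> real"
  assumes Pm: "P \<in> borel_measurable borel" and fin: "\<And>x. finite {y. P (x,y) = 0}"
  shows "{p. P p = 0} \<in> null_sets lborel"
proof -
  have A: "{p. P p = 0} \<in> sets borel" using Pm by measurable
  have A2: "{p. P p = 0} \<in> sets (lborel \<Otimes>\<^sub>M (lborel::real measure))" unfolding lborel_prod using A by simp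
  have "emeasure lborel {p. P p = 0} = emeasure (lborel \<Otimes>\<^sub>M (lborel::real measure)) {p. P p = 0}"
    by (simp add: lborel_prod)
  also have "\<dots> = (\<integral>\<^sup>+x. emeasure lborel (Pair x -` {p. P p = 0}) \<partial>lborel)"
    by (rule lborel.emeasure_pair_measure_alt[OF A2])
  also have "\<dots> = (\<integral>\<^sup>+x. (0::ennreal) \<partial>(lborel::real measure))"
  proof (intro nn_integral_cong)
    fix x :: real
    have "Pair x -` {p. P p = 0} = {y. P (x,y) = 0}" by auto
    then show "emeasure lborel (Pair x -` {p. P p = 0}) = 0"
      using finite_imp_null_set_lborel[OF fin[of x]] by (simp add: null_sets_def)
  qed
  finally show ?thesis using A by (intro null_setsI) auto
qed

lemma kk_poly: "kk e x y = poly [: e^6*x^3 + 3*e^5*x^3 - 6*e^5*x^2 + 7*e^4*x^3 - 13*e^4*x^2 + 12*e^4*x + 5*e^3*x^3 - 16*e^3*x^2 + 16*e^3*x - 8*e^3 + 3*e^2*x^2 + 3*e^2*x - 4*e^2 - e*x + 2*e + 1,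
   3*e^5*x^2 + 6*e^4*x^2 - 12*e^4*x + 7*e^3*x^2 - 14*e^3*x + 12*e^3 - 2*e^2*x + 4*e^2 - e,
   3*e^4*x + 3*e^3*x - 6*e^3 - e^2, e^3 :] y"
  unfolding kk_def n1_def n2_def dd_def by simp algebra

lemma null_kk: "e \<noteq> 0 \<Longrightarrow> {p. kk e (fst p) (snd p) = 0} \<in> null_sets lborel"
proof (rule null_fiber)
  assume e: "e \<noteq> 0"
  show "(\<lambda>p. kk e (fst p) (snd p)) \<in> borel_measurable borel"
    using cont_kk by (rule borel_measurable_continuous_onI)
  fix x
  show "finite {y. kk e (fst (x, y)) (snd (x, y)) = 0}"
    unfolding fst_conv snd_conv kk_poly using e by (intro poly_roots_finite) simp
qed

lemma null_dd: "e \<noteq> 0 \<Longrightarrow> {p. dd e (fst p) (snd p) = 0} \<in> null_sets lborel"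
proof (rule null_fiber)
  assume e: "e \<noteq> 0"
  show "(\<lambda>p. dd e (fst p) (snd p)) \<in> borel_measurable borel"
    using cont_dd by (rule borel_measurable_continuous_onI)
  fix x
  have "{y. dd e x y = 0} \<subseteq> {(2 * e^2 * x^2 - e * (e + 1) * x + 2 * e + 1) / e}"
    using e by (auto simp: dd_def field_simps)
  then show "finite {y. dd e (fst (x, y)) (snd (x, y)) = 0}"
    by (auto intro: finite_subset)
qed

lemma null_Om: "e \<noteq> 0 \<Longrightarrow> - Om e \<in> null_sets lborel"
proof -
  assume e: "e \<noteq> 0"
  have "- Om e = {p. dd e (fst p) (snd p) = 0} \<union> {p. kk e (fst p) (snd p) = 0}"
    by (auto simp: Om_def)
  then show ?thesis using null_sets.Un[OF null_dd[OF e] null_kk[OF e]] by simp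
qed

definition rho :: "real \<Rightarrow> real \<times> real \<Rightarrow> real" where
  "rho e p = 1 / \<bar>fst p * qq e (fst p)\<bar>"

lemma JP: "(n1x e x y * dd e x y - n1 e x y * ddx e x y) * (n2y e x y * dd e x y - n2 e x y * ddy e x y)
   - (n1y e x y * dd e x y - n1 e x y * ddy e x y) * (n2x e x y * dd e x y - n2 e x y * ddx e x y) = kk e x y * dd e x y"
  unfolding kk_def n1_def n2_def dd_def n1x_def n1y_def n2x_def n2y_def ddx_def ddy_def by algebra

lemma MP: "x * qq e x * kk e x y = n1 e x y * ((dd e x y)^2 + e^2 * (n1 e x y)^2)"
  unfolding kk_def n1_def n2_def dd_def qq_def by algebra

lemma jac_abs: "(D::real) \<noteq> 0 \<Longrightarrow> A / D^2 * B / D^2 - C / D^2 * E / D^2 = (A * B - C * E) / D^4"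
  by (simp add: field_simps power2_eq_square power4_eq_xxxx)

lemma jac_Fd: "dd e x y \<noteq> 0 \<Longrightarrow> jac (Fd e x y) = kk e x y / (dd e x y)^3"
proof -
  assume D: "dd e x y \<noteq> 0"
  have "jac (Fd e x y) = a11 e x y * a22 e x y - a12 e x y * a21 e x y"
    by (simp add: jac_def Fd_def)
  also have "\<dots> = kk e x y * dd e x y / (dd e x y)^4"
    unfolding a11_def a12_def a21_def a22_def JP[symmetric] using jac_abs[OF D] by (simp add: mult.commute mult.left_commute)
  also have "\<dots> = kk e x y / (dd e x y)^3"
    using D by (simp add: power4_eq_xxxx power3_eq_cube)
  finally show ?thesis .
qed

lemma abs_cancel: "(c::real) \<noteq> 0 \<Longrightarrow> 1 / \<bar>t * c\<bar> * \<bar>c\<bar> = 1 / \<bar>t\<bar>"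
  by (cases "t = 0") (simp_all add: abs_mult)

lemma qq_frac: "(D::real) \<noteq> 0 \<Longrightarrow> N / D * qq e (N / D) = N * (D^2 + e^2 * N^2) / D^3"
  by (simp add: qq_def field_simps power2_eq_square power3_eq_cube)

lemma rho_id:
  assumes "p \<in> Om e"
  shows "rho e (khk_Phi e p) * \<bar>kk e (fst p) (snd p) / (dd e (fst p) (snd p))^3\<bar> = rho e p"
proof -
  obtain x y where p: "p = (x,y)" by (cases p)
  have D: "dd e x y \<noteq> 0" and K: "kk e x y \<noteq> 0" using assms by (auto simp: Om_def p)
  have f1: "fst (khk_Phi e p) = n1 e x y / dd e x y" by (simp add: p Phi_eq)
  have "fst (khk_Phi e p) * qq e (fst (khk_Phi e p)) = n1 e x y * ((dd e x y)^2 + e^2 * (n1 e x y)^2) / (dd e x y)^3"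
    unfolding f1 by (rule qq_frac[OF D])
  also have "\<dots> = x * qq e x * (kk e x y / (dd e x y)^3)" by (simp add: MP[symmetric])
  finally have "rho e (khk_Phi e p) = 1 / \<bar>x * qq e x * (kk e x y / (dd e x y)^3)\<bar>"
    by (simp add: rho_def)
  then show ?thesis using abs_cancel[of "kk e x y / (dd e x y)^3" "x * qq e x"] D K
    by (simp add: p rho_def)
qed

lemma cont_n1: "continuous_on UNIV (\<lambda>p::real\<times>real. n1 e (fst p) (snd p))"
  unfolding n1_def by (intro continuous_intros)
lemma cont_n2: "continuous_on UNIV (\<lambda>p::real\<times>real. n2 e (fst p) (snd p))"
  unfolding n2_def by (intro continuous_intros)

lemma Phi_meas: "khk_Phi e \<in> borel_measurable borel"
proof -
  have [measurable]: "(\<lambda>p::real\<times>real. n1 e (fst p) (snd p)) \<in> borel_measurable borel"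
    "(\<lambda>p::real\<times>real. n2 e (fst p) (snd p)) \<in> borel_measurable borel"
    "(\<lambda>p::real\<times>real. dd e (fst p) (snd p)) \<in> borel_measurable borel"
    using cont_n1 cont_n2 cont_dd by (auto intro: borel_measurable_continuous_onI)
  show ?thesis unfolding Phi_fun by measurable
qed

lemma rho_meas [measurable]: "(\<lambda>p. rho e p) \<in> borel_measurable borel"
proof -
  have "continuous_on UNIV (\<lambda>p::real\<times>real. fst p * qq e (fst p))"
    unfolding qq_def by (intro continuous_intros)
  then have [measurable]: "(\<lambda>p::real\<times>real. fst p * qq e (fst p)) \<in> borel_measurable borel"
    by (rule borel_measurable_continuous_onI)
  show ?thesis unfolding rho_def by measurable
qed

lemma Jf_meas: "(\<lambda>p. \<bar>kk e (fst p) (snd p) / (dd e (fst p) (snd p))^3\<bar>) \<in> borel_measurable borel"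
proof -
  have [measurable]: "(\<lambda>p::real\<times>real. kk e (fst p) (snd p)) \<in> borel_measurable borel"
    "(\<lambda>p::real\<times>real. dd e (fst p) (snd p)) \<in> borel_measurable borel"
    using cont_kk cont_dd by (auto intro: borel_measurable_continuous_onI)
  show ?thesis by measurable
qed

lemma rho_nonneg: "rho e p \<ge> 0" by (simp add: rho_def)

lemma invariance:
  assumes e: "e \<noteq> 0" and B: "B \<in> sets borel"
  shows "emeasure (density lborel (\<lambda>p. ennreal (rho e p))) (khk_Phi e -` B)
       = emeasure (density lborel (\<lambda>p. ennreal (rho e p))) B"
proof -
  let ?F = "khk_Phi e"
  let ?J = "\<lambda>p. \<bar>kk e (fst p) (snd p) / (dd e (fst p) (snd p))^3\<bar>"
  have Fm: "?F \<in> borel_measurable borel" by (rule Phi_meas)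
  have FB: "?F -` B \<in> sets borel" using measurable_sets[OF Fm B] by simp
  have AE1: "AE p in lborel. p \<in> Om e" using AE_not_in[OF null_Om[OF e]] by simp
  have AE2: "AE p in lborel. p \<in> Om (-e)" using AE_not_in[OF null_Om[of "-e"]] e by simp
  have der: "(?F has_derivative Fd e (fst p) (snd p)) (at p)" if "p \<in> Om e" for p
    using der_Phi[of e "fst p" "snd p"] that by (simp add: Om_def)
  have J: "?J p = \<bar>jac (Fd e (fst p) (snd p))\<bar>" if "p \<in> Om e" for p
    using jac_Fd[of e "fst p" "snd p"] that by (simp add: Om_def)
  have imgB: "?F ` Om e \<in> sets borel" by (simp add: Phi_image Om_borel)
  have fm: "(\<lambda>q. ennreal (rho e q) * indicator B q) \<in> borel_measurable borel" using B by measurable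
  have "emeasure (density lborel (\<lambda>p. ennreal (rho e p))) (?F -` B)
      = (\<integral>\<^sup>+ p. ennreal (rho e p) * indicator (?F -` B) p \<partial>lborel)"
    using FB by (intro emeasure_density) auto
  also have "\<dots> = (\<integral>\<^sup>+ p. ennreal (rho e (?F p)) * indicator B (?F p) * (ennreal (?J p) * indicator (Om e) p) \<partial>lborel)"
  proof (rule nn_integral_cong_AE)
    show "AE p in lborel. ennreal (rho e p) * indicator (?F -` B) p
        = ennreal (rho e (?F p)) * indicator B (?F p) * (ennreal (?J p) * indicator (Om e) p)"
      using AE1
    proof (rule AE_mp, intro AE_I2 impI)
      fix p assume p: "p \<in> Om e"
      have "ennreal (rho e (?F p)) * ennreal (?J p) = ennreal (rho e p)"
        using rho_id[OF p] by (simp add: ennreal_mult[symmetric] rho_nonneg)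
      then show "ennreal (rho e p) * indicator (?F -` B) p
        = ennreal (rho e (?F p)) * indicator B (?F p) * (ennreal (?J p) * indicator (Om e) p)"
        using p by (auto simp: indicator_def mult.commute mult.left_commute)
    qed
  qed
  also have "\<dots> = (\<integral>\<^sup>+ q. ennreal (rho e q) * indicator B q * indicator (?F ` Om e) q \<partial>lborel)"
    by (rule cov_w[symmetric, OF Om_borel imgB der Phi_inj Jf_meas J Fm fm])
  also have "\<dots> = (\<integral>\<^sup>+ q. ennreal (rho e q) * indicator B q \<partial>lborel)"
    unfolding Phi_image
    by (rule nn_integral_cong_AE, rule AE_mp[OF AE2], intro AE_I2 impI) (simp add: indicator_def)
  also have "\<dots> = emeasure (density lborel (\<lambda>p. ennreal (rho e p))) B"
    using B by (intro emeasure_density[symmetric]) auto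
  finally show ?thesis .
qed


lemma box_meas: "emeasure lborel (box (1::real,0::real) (2,1)) = 1"
  by (simp add: emeasure_lborel_box_eq Basis_pair_real inner_Pair_0)

lemma nonzero: "emeasure (density lborel (\<lambda>p. ennreal (rho e p))) UNIV \<noteq> 0"
proof
  assume "emeasure (density lborel (\<lambda>p. ennreal (rho e p))) UNIV = 0"
  then have "(\<integral>\<^sup>+ p. ennreal (rho e p) * indicator UNIV p \<partial>lborel) = 0"
    by (subst (asm) emeasure_density) auto
  then have "(\<integral>\<^sup>+ p. ennreal (rho e p) \<partial>lborel) = 0" by simp
  then have "AE p in lborel. ennreal (rho e p) = 0"
    by (subst (asm) nn_integral_0_iff_AE) auto
  then have "AE p in (lborel :: (real \<times> real) measure). fst p = 0"
  proof (rule AE_mp, intro AE_I2 impI)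
    fix p :: "real \<times> real" assume "ennreal (rho e p) = 0"
    then have "rho e p \<le> 0" using ennreal_eq_0_iff by blast
    moreover have "fst p \<noteq> 0 \<Longrightarrow> rho e p > 0"
      using qq_pos[of e "fst p"] by (simp add: rho_def)
    ultimately show "fst p = 0" by force
  qed
  then obtain N :: "(real \<times> real) set" where N: "{p \<in> space lborel. \<not> fst p = 0} \<subseteq> N" "emeasure lborel N = 0" "N \<in> sets lborel"
    by (rule AE_E)
  have "box (1::real,0::real) (2,1) \<subseteq> N"
    using N(1) by (auto simp: mem_box Basis_pair_real inner_Pair_0)
  then have "emeasure lborel (box (1::real,0::real) (2,1)) \<le> emeasure lborel N"
    using N(3) by (intro emeasure_mono) auto
  then show False using N(2) box_meas by simp
qed

theorem proposition7:
  fixes e :: real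
  assumes "e \<noteq> 0"
  shows "(\<exists>X. lie_symmetry (khk_Phi e) X) \<and> preserves_ac_measure (khk_Phi e)"
proof
  show "\<exists>X. lie_symmetry (khk_Phi e) X" using lie[OF assms] by blast
  show "preserves_ac_measure (khk_Phi e)"
    unfolding preserves_ac_measure_def
  proof (intro exI[of _ "density lborel (\<lambda>p. ennreal (rho e p))"] conjI ballI)
    show "sets (density lborel (\<lambda>p. ennreal (rho e p))) = sets lborel" by simp
    show "sigma_finite_measure (density lborel (\<lambda>p. ennreal (rho e p)))"
      by (subst sigma_finite_measure.sigma_finite_iff_density_finite[OF sigma_finite_lborel]) auto
    show "absolutely_continuous lborel (density lborel (\<lambda>p. ennreal (rho e p)))"
      by (rule absolutely_continuousI_density) measurable
    show "emeasure (density lborel (\<lambda>p. ennreal (rho e p))) UNIV \<noteq> 0" by (rule nonzero)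
    show "khk_Phi e \<in> borel_measurable borel" by (rule Phi_meas)
    fix B :: "(real \<times> real) set" assume "B \<in> sets borel"
    then show "emeasure (density lborel (\<lambda>p. ennreal (rho e p))) (khk_Phi e -` B)
       = emeasure (density lborel (\<lambda>p. ennreal (rho e p))) B"
      by (rule invariance[OF assms])
  qed
qed

end
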